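(* Let $\mathcal{V}$ be a linear subspace of $\mathrm{A}_n(\mathbb{K})$. Let $C\subseteq\mathbb{K}^n$ be a linear hyperplane of $\mathbb{K}^n$ if $\#\mathbb{K}=2$, or a union $H_1\cup H_2$ of two linear hyperplanes of $\mathbb{K}^n$ otherwise. Assume that $E:=\{x\in\mathbb{K}^n:\dim\mathcal{V}x=n-1\}$ is included in $C$, where $\mathcal{V}x:=\{Mx\mid M\in\mathcal{V}\}$. Then $\dim\mathcal{V}\leq\binom{n-1}{2}$.
   Context: $\mathrm{A}_n(\mathbb{K})$ denotes the space of alternating $n\times n$ matrices over the field $\mathbb{K}$ (skew-symmetric with zero diagonal). *)

theory Defs
  imports "HOL-Analysis.Analysis"
begin

definition mat_scale :: "'a::field \<Rightarrow> 'a^'n^'m \<Rightarrow> 'a^'n^'m" where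
  "mat_scale c M = (\<chi> i j. c * M $ i $ j)"

interpretation matsp: vector_space "mat_scale :: 'a::field \<Rightarrow> 'a^'n^'m \<Rightarrow> 'a^'n^'m"
  by unfold_locales (auto simp: mat_scale_def vec_eq_iff algebra_simps)

definition alternating :: "'a::field^'n^'n \<Rightarrow> bool" where
  "alternating M \<longleftrightarrow> transpose M = - M \<and> (\<forall>i. M $ i $ i = 0)"

definition linear_hyperplane :: "('a::field^'n) set \<Rightarrow> bool" where
  "linear_hyperplane H \<longleftrightarrow>
     (\<exists>a::'a^'n. a \<noteq> 0 \<and> H = {x. (\<Sum>i\<in>UNIV. a $ i * x $ i) = 0})"

end

theory Submission
  imports Defs
begin


definition bdot :: "'a::field^'n \<Rightarrow> 'a^'n \<Rightarrow> 'a" where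
  "bdot y z = (\<Sum>i\<in>UNIV. y $ i * z $ i)"

lemma bdot_comm: "bdot y z = bdot z y"
  unfolding bdot_def by (simp add: mult.commute)

lemma bdot_add_right: "bdot y (u + v) = bdot y u + bdot y v"
  unfolding bdot_def by (simp add: algebra_simps sum.distrib)

lemma bdot_scale_right: "bdot y (c *s v) = c * bdot y v"
  unfolding bdot_def by (simp add: algebra_simps sum_distrib_left)

lemma bdot_add_left: "bdot (u + v) y = bdot u y + bdot v y"
  unfolding bdot_def by (simp add: algebra_simps sum.distrib)

lemma bdot_scale_left: "bdot (c *s v) y = c * bdot v y"
  unfolding bdot_def by (simp add: algebra_simps sum_distrib_left)

lemma bdot_axis: "bdot y (axis i 1) = y $ i"
  unfolding bdot_def axis_def by (simp add: if_distrib cong: if_cong)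

lemma bdot_zero_right[simp]: "bdot y 0 = 0"
  unfolding bdot_def by simp

lemma bdot_zero_left[simp]: "bdot 0 y = 0"
  unfolding bdot_def by simp

lemma linear_bdot: "Vector_Spaces.linear (*s) ((*) :: 'a::field \<Rightarrow> _) (bdot y)"
  by unfold_locales (auto simp: bdot_add_right bdot_scale_right)

lemma subspace_bdot0: "vec.subspace {v. bdot y v = 0}"
  unfolding vec.subspace_def by (auto simp: bdot_add_right bdot_scale_right)

lemma subspace_ann: "vec.subspace {y. \<forall>z\<in>S. bdot y z = 0}"
  unfolding vec.subspace_def by (auto simp: bdot_add_left bdot_scale_left)

lemma alt_skew:
  assumes "alternating M"
  shows "bdot y (M *v x) = - bdot x (M *v y)"
proof -
  have sk: "M $ j $ i = - M $ i $ j" for i j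
  proof -
    have "transpose M $ i $ j = (- M) $ i $ j" using assms unfolding alternating_def by simp
    then show ?thesis by (simp add: transpose_def)
  qed
  have "bdot x (M *v y) = (\<Sum>i\<in>UNIV. \<Sum>j\<in>UNIV. x $ i * (M $ i $ j * y $ j))"
    unfolding bdot_def matrix_vector_mult_def by (simp add: sum_distrib_left)
  also have "\<dots> = (\<Sum>j\<in>UNIV. \<Sum>i\<in>UNIV. x $ i * (M $ i $ j * y $ j))"
    by (rule sum.swap)
  also have "\<dots> = (\<Sum>j\<in>UNIV. \<Sum>i\<in>UNIV. - (y $ j * (M $ j $ i * x $ i)))"
    by (intro sum.cong refl) (subst sk, simp add: algebra_simps)
  also have "\<dots> = - (\<Sum>j\<in>UNIV. \<Sum>i\<in>UNIV. y $ j * (M $ j $ i * x $ i))"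
    by (simp add: sum_negf)
  also have "(\<Sum>j\<in>UNIV. \<Sum>i\<in>UNIV. y $ j * (M $ j $ i * x $ i)) = bdot y (M *v x)"
    unfolding bdot_def matrix_vector_mult_def by (simp add: sum_distrib_left)
  finally show ?thesis by simp
qed

lemma alt_iso:
  fixes M :: "'a::field^'n^'n"
  assumes "alternating M"
  shows "bdot x (M *v x) = 0"
proof -
  have sk: "M $ j $ i = - M $ i $ j" for i j
  proof -
    have "transpose M $ i $ j = (- M) $ i $ j" using assms unfolding alternating_def by simp
    then show ?thesis by (simp add: transpose_def)
  qed
  have dg: "M $ i $ i = 0" for i using assms unfolding alternating_def by auto
  define f where "f p = x $ fst p * (M $ fst p $ snd p * x $ snd p)" for p :: "'n \<times> 'n"
  have fsw: "f (prod.swap p) = - f p" for p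
    unfolding f_def by (cases p) (simp, subst sk, simp add: algebra_simps)
  have fd: "fst p = snd p \<Longrightarrow> f p = 0" for p
    unfolding f_def by (cases p) (simp add: dg)
  obtain r :: "'n \<Rightarrow> nat" and m where r: "inj_on r (UNIV::'n set)"
    using finite_imp_inj_to_nat_seg[of "UNIV::'n set"] by auto
  define A where "A = {p::'n\<times>'n. r (fst p) < r (snd p)}"
  define B where "B = {p::'n\<times>'n. r (snd p) < r (fst p)}"
  define D where "D = {p::'n\<times>'n. fst p = snd p}"
  have U: "(UNIV::('n\<times>'n) set) = A \<union> B \<union> D"
  proof -
    { fix p :: "'n\<times>'n"
      have "p \<in> A \<or> p \<in> B \<or> p \<in> D"
      proof (cases "r (fst p) = r (snd p)")
        case True then have "fst p = snd p" using r by (meson injD)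
        then show ?thesis unfolding D_def by simp
      next
        case False then show ?thesis unfolding A_def B_def by auto
      qed }
    then show ?thesis by blast
  qed
  have BA: "B = prod.swap ` A"
    unfolding A_def B_def by (auto simp: image_iff)
  have sumB: "sum f B = - sum f A"
  proof -
    have "sum f B = sum (f \<circ> prod.swap) A"
      unfolding BA by (rule sum.reindex) (auto simp: inj_on_def)
    also have "\<dots> = - sum f A" by (simp add: fsw sum_negf)
    finally show ?thesis .
  qed
  have sumD: "sum f D = 0" using fd unfolding D_def by simp
  have dis1: "A \<inter> B = {}" unfolding A_def B_def by auto
  have dis2: "(A \<union> B) \<inter> D = {}" unfolding A_def B_def D_def by auto
  have "sum f UNIV = sum f A + sum f B + sum f D"
    unfolding U by (simp add: sum.union_disjoint dis1 dis2)
  also have "\<dots> = 0" by (simp add: sumB sumD)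
  finally have "sum f UNIV = 0" .
  moreover have "bdot x (M *v x) = sum f UNIV"
    unfolding bdot_def matrix_vector_mult_def f_def
    by (simp add: sum_distrib_left sum.cartesian_product case_prod_beta)
  ultimately show ?thesis by simp
qed



definition mu :: "'n \<Rightarrow> 'm \<Rightarrow> 'a::field^'m^'n" where
  "mu a b = (\<chi> i j. if i = a \<and> j = b then 1 else 0)"

definition matbasis :: "('a::field^'m^'n) set" where
  "matbasis = {mu a b | a b. True}"

lemma mu_eq_iff: "mu a b = (mu c d :: 'a::field^'m^'n) \<longleftrightarrow> a = c \<and> b = d"
proof
  assume "mu a b = (mu c d :: 'a::field^'m^'n)"
  then have "(mu a b :: 'a::field^'m^'n) $ a $ b = mu c d $ a $ b" by simp
  then show "a = c \<and> b = d" unfolding mu_def by (auto split: if_splits)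
qed simp

lemma matbasis_image: "matbasis = (\<lambda>(a,b). mu a b) ` UNIV"
  unfolding matbasis_def by auto

lemma finite_matbasis: "finite (matbasis :: ('a::field^'m^'n) set)"
  unfolding matbasis_image by simp

lemma sum_mat_component: "(sum F S :: 'a::field^'m^'n) $ i $ j = (\<Sum>x\<in>S. F x $ i $ j)"
  by (simp add: sum_component)

lemma mat_scale_component: "mat_scale c M $ i $ j = c * M $ i $ j"
  unfolding mat_scale_def by simp

lemma independent_matbasis: "matsp.independent (matbasis :: ('a::field^'m^'n) set)"
proof (rule matsp.independent_if_scalars_zero)
  show "finite (matbasis :: ('a::field^'m^'n) set)" by (rule finite_matbasis)
  fix f :: "('a^'m^'n) \<Rightarrow> 'a" and x :: "'a^'m^'n"
  assume eq: "(\<Sum>x\<in>matbasis. mat_scale (f x) x) = 0" and x: "x \<in> matbasis"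
  obtain a b where ab: "x = mu a b" using x unfolding matbasis_def by auto
  have comp: "y $ a $ b = (if y = x then 1 else 0)" if "y \<in> matbasis" for y
  proof -
    from that obtain c d where "y = mu c d" unfolding matbasis_def by auto
    then show ?thesis unfolding ab by (auto simp: mu_eq_iff) (auto simp: mu_def)
  qed
  have "0 = (\<Sum>y\<in>matbasis. mat_scale (f y) y) $ a $ b" using eq by simp
  also have "\<dots> = (\<Sum>y\<in>matbasis. f y * (if y = x then 1 else 0))"
    unfolding sum_mat_component mat_scale_component
    by (intro sum.cong refl) (simp add: comp)
  also have "\<dots> = (\<Sum>y\<in>matbasis. if y = x then f x else 0)"
    by (intro sum.cong refl) simp
  also have "\<dots> = f x" using x by (simp add: sum.delta[OF finite_matbasis])
  finally show "f x = 0" by simp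
qed

lemma span_matbasis: "matsp.span (matbasis :: ('a::field^'m^'n) set) = UNIV"
proof -
  have "M \<in> matsp.span matbasis" for M :: "'a^'m^'n"
  proof -
    have "M = (\<Sum>p\<in>UNIV. mat_scale (M $ fst p $ snd p) (mu (fst p) (snd p)))"
    proof -
      have "(\<Sum>p\<in>UNIV. mat_scale (M $ fst p $ snd p) (mu (fst p) (snd p) :: 'a^'m^'n)) $ i $ j = M $ i $ j" for i j
      proof -
        have "(\<Sum>p\<in>UNIV. mat_scale (M $ fst p $ snd p) (mu (fst p) (snd p) :: 'a^'m^'n)) $ i $ j
           = (\<Sum>p\<in>UNIV. if p = (i,j) then M $ i $ j else 0)"
          unfolding sum_mat_component mat_scale_component
          by (intro sum.cong refl) (auto simp: mu_def)
        also have "\<dots> = M $ i $ j" by simp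
        finally show ?thesis .
      qed
      note * = this
      show ?thesis
      proof (rule iffD2[OF vec_eq_iff], intro allI, rule iffD2[OF vec_eq_iff], intro allI)
        fix i j show "M $ i $ j = (\<Sum>p\<in>UNIV. mat_scale (M $ fst p $ snd p) (mu (fst p) (snd p) :: 'a^'m^'n)) $ i $ j"
          by (rule sym, rule *)
      qed
    qed
    also have "\<dots> \<in> matsp.span matbasis"
      by (intro matsp.span_sum matsp.span_scale matsp.span_base) (auto simp: matbasis_def)
    finally show ?thesis .
  qed
  then show ?thesis by blast
qed

interpretation matfd: finite_dimensional_vector_space
  "mat_scale :: 'a::field \<Rightarrow> 'a^'m^'n \<Rightarrow> 'a^'m^'n" matbasis
  by unfold_locales (auto simp: finite_matbasis independent_matbasis span_matbasis)

lemma linear_mv: "Vector_Spaces.linear mat_scale (*s) (\<lambda>M::'a::field^'n^'m. M *v e)"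
  by unfold_locales
    (auto simp: vec_eq_iff matrix_vector_mult_def mat_scale_def sum.distrib
        sum_distrib_left algebra_simps)

lemma dim_union_le:
  assumes "finite B"
  shows "vec.dim (A \<union> B) \<le> vec.dim A + card B"
  using assms
proof (induction B rule: finite_induct)
  case empty then show ?case by simp
next
  case (insert x F)
  have "vec.dim (A \<union> insert x F) = vec.dim (insert x (A \<union> F))" by simp
  also have "\<dots> \<le> vec.dim (A \<union> F) + 1" by (subst vec.dim_insert) simp
  finally have 1: "vec.dim (A \<union> insert x F) \<le> vec.dim (A \<union> F) + 1" .
  have 2: "card (insert x F) = card F + 1" using insert(1,2) by simp
  show ?case using 1 2 insert(3) by linarith
qed

lemma mdim_union_le:
  assumes "finite B"
  shows "matsp.dim (A \<union> B) \<le> matsp.dim A + card (B :: ('a::field^'m^'n) set)"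
  using assms
proof (induction B rule: finite_induct)
  case empty then show ?case by simp
next
  case (insert x F)
  have "matsp.dim (A \<union> insert x F) = matsp.dim (insert x (A \<union> F))" by simp
  also have "\<dots> \<le> matsp.dim (A \<union> F) + 1" by (subst matfd.dim_insert) simp
  finally have 1: "matsp.dim (A \<union> insert x F) \<le> matsp.dim (A \<union> F) + 1" .
  have 2: "card (insert x F) = card F + 1" using insert(1,2) by simp
  show ?case using 1 2 insert(3) by linarith
qed

lemma rank_nullity_le:
  fixes V :: "('a::field^'n^'n) set"
  assumes V: "matsp.subspace V"
  shows "matsp.dim V \<le> matsp.dim {M\<in>V. M *v e = 0} + vec.dim ((\<lambda>M. M *v e) ` V)"
proof -
  let ?f = "\<lambda>M::'a^'n^'n. M *v e"
  obtain D where D: "D \<subseteq> ?f ` V" "vec.independent D" "?f ` V \<subseteq> vec.span D" "card D = vec.dim (?f ` V)"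
    using vec.basis_exists by blast
  have fD: "finite D" using D(2) vec.finiteI_independent by blast
  have "\<forall>d\<in>D. \<exists>M\<in>V. ?f M = d" using D(1) by blast
  then obtain g where g: "\<And>d. d \<in> D \<Longrightarrow> g d \<in> V \<and> ?f (g d) = d" by (metis (no_types, lifting))
  let ?G = "g ` D"
  have GV: "?G \<subseteq> V" using g by auto
  have fG: "?f ` ?G = D"
  proof -
    have "?f ` ?G = (\<lambda>d. ?f (g d)) ` D" by (simp add: image_image)
    also have "\<dots> = (\<lambda>d. d) ` D" by (rule image_cong) (use g in auto)
    finally show ?thesis by simp
  qed
  have "V \<subseteq> matsp.span ({M\<in>V. M *v e = 0} \<union> ?G)"
  proof
    fix M assume M: "M \<in> V"
    have "?f M \<in> vec.span (?f ` ?G)" using D(3) M fG by auto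
    also have "vec.span (?f ` ?G) = ?f ` matsp.span ?G"
      by (rule vector_space_pair.linear_span_image[OF _ linear_mv]) unfold_locales
    finally obtain N where N: "N \<in> matsp.span ?G" "?f N = ?f M" by auto
    have NV: "N \<in> V" using N(1) matsp.span_minimal[OF GV V] by auto
    have "M - N \<in> V" using M NV V by (simp add: matsp.subspace_diff)
    moreover have "(M - N) *v e = 0" using N(2) by (simp add: matrix_vector_mult_diff_rdistrib)
    ultimately have "M - N \<in> {M\<in>V. M *v e = 0}" by simp
    then have a: "M - N \<in> matsp.span ({M\<in>V. M *v e = 0} \<union> ?G)"
      by (meson UnI1 matsp.span_base)
    have b: "N \<in> matsp.span ({M\<in>V. M *v e = 0} \<union> ?G)"
      using N(1) matsp.span_mono[of ?G] by blast
    have "M = (M - N) + N" by simp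
    then show "M \<in> matsp.span ({M\<in>V. M *v e = 0} \<union> ?G)"
      using matsp.span_add[OF a b] by simp
  qed
  then have "matsp.dim V \<le> matsp.dim ({M\<in>V. M *v e = 0} \<union> ?G)"
    by (rule matfd.dim_mono)
  also have "\<dots> \<le> matsp.dim {M\<in>V. M *v e = 0} + card ?G"
    by (rule mdim_union_le) (use fD in simp)
  finally have 1: "matsp.dim V \<le> matsp.dim {M\<in>V. M *v e = 0} + card ?G" .
  have "card ?G \<le> card D" using fD card_image_le by blast
  then show ?thesis using 1 D(4) by linarith
qed



lemma union_two_proper:
  fixes H1 H2 :: "('a::field^'n) set"
  assumes "vec.subspace H1" "vec.subspace H2" "H1 \<noteq> UNIV" "H2 \<noteq> UNIV"
  shows "\<exists>x. x \<notin> H1 \<and> x \<notin> H2"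
proof -
  obtain a where a: "a \<notin> H1" using assms(3) by blast
  obtain b where b: "b \<notin> H2" using assms(4) by blast
  show ?thesis
  proof (cases "a \<in> H2 \<and> b \<in> H1")
    case True
    have "a + b \<notin> H1"
    proof
      assume "a + b \<in> H1"
      then have "(a + b) - b \<in> H1" using True assms(1) vec.subspace_diff by blast
      then show False using a by simp
    qed
    moreover have "a + b \<notin> H2"
    proof
      assume "a + b \<in> H2"
      then have "(a + b) - a \<in> H2" using True assms(2) vec.subspace_diff by blast
      then show False using b by simp
    qed
    ultimately show ?thesis by blast
  next
    case False then show ?thesis using a b by blast
  qed
qed

lemma line_unique:
  fixes H :: "('a::field^'n) set"
  assumes "vec.subspace H" "e \<notin> H" "x + s *s e \<in> H" "x + t *s e \<in> H"
  shows "s = t"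
proof (rule ccontr)
  assume st: "s \<noteq> t"
  have "(x + s *s e) - (x + t *s e) \<in> H" using assms vec.subspace_diff by blast
  then have "(s - t) *s e \<in> H" by (simp add: algebra_simps vector_sadd_rdistrib vector_ssub_ldistrib)
  then have "inverse (s - t) *s ((s - t) *s e) \<in> H" using assms(1) vec.subspace_scale by blast
  moreover have "inverse (s - t) *s ((s - t) *s e) = e"
  proof -
    have "inverse (s - t) * (s - t) = 1" using st by simp
    then show ?thesis by (simp only: vector_smult_assoc vector_smult_lid)
  qed
  ultimately have "e \<in> H" by simp
  then show False using assms(2) by simp
qed

lemma three_elems:
  assumes "CARD('a::field) \<noteq> 2"
  shows "\<exists>c::'a. c \<noteq> 0 \<and> c \<noteq> 1"
proof (rule ccontr)
  assume "\<not> ?thesis"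
  then have "(UNIV::'a set) = {0, 1}" by auto
  then have "CARD('a) = card {0::'a, 1}" by simp
  also have "\<dots> = 2" by simp
  finally have "CARD('a) = 2" .
  then show False using assms by simp
qed

lemma line_avoid:
  fixes H1 H2 :: "('a::field^'n) set"
  assumes "vec.subspace H1" "vec.subspace H2" "e \<notin> H1" "e \<notin> H2"
    and "CARD('a) = 2 \<Longrightarrow> H1 = H2"
  shows "\<exists>t. x + t *s e \<notin> H1 \<and> x + t *s e \<notin> H2"
proof (cases "CARD('a) = 2")
  case True
  then have eq: "H1 = H2" using assms(5) by simp
  have "x + 0 *s e \<notin> H1 \<or> x + 1 *s e \<notin> H1"
    using line_unique[OF assms(1) assms(3), of x 0 1] by auto
  then show ?thesis using eq by blast
next
  case False
  then obtain c :: 'a where c: "c \<noteq> 0" "c \<noteq> 1" using three_elems by blast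
  note u1 = line_unique[OF assms(1) assms(3), of x]
  note u2 = line_unique[OF assms(2) assms(4), of x]
  show ?thesis
  proof (rule ccontr)
    assume "\<not> ?thesis"
    then have all: "\<And>t. x + t *s e \<in> H1 \<or> x + t *s e \<in> H2" by blast
    from all[of 0] all[of 1] all[of c] c u1 u2 show False
      by (metis zero_neq_one)
  qed
qed

lemma separate:
  fixes Z :: "('a::field^'n) set"
  assumes Z: "vec.subspace Z" and e: "e \<notin> Z"
  shows "\<exists>y. (\<forall>z\<in>Z. bdot y z = 0) \<and> bdot y e \<noteq> 0"
proof -
  obtain B where B: "B \<subseteq> Z" "vec.independent B" "Z \<subseteq> vec.span B" "card B = vec.dim Z"
    using vec.basis_exists by blast
  have spB: "vec.span B = Z" using B Z vec.span_minimal by blast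
  have ind: "vec.independent (insert e B)"
    using B(2) e spB vec.independent_insertI by blast
  interpret vp: vector_space_pair "(*s) :: 'a \<Rightarrow> 'a^'n \<Rightarrow> 'a^'n" "(*) :: 'a \<Rightarrow> 'a \<Rightarrow> 'a"
    by unfold_locales
  obtain g where g: "Vector_Spaces.linear (*s) ((*) :: 'a \<Rightarrow> 'a \<Rightarrow> 'a) g"
    "\<forall>x\<in>insert e B. g x = (if x = e then 1 else 0)"
    using vp.linear_independent_extend[OF ind, where f="\<lambda>x. if x = e then 1 else 0"] by blast
  define y where "y = (\<chi> i. g (axis i 1))"
  have yg: "bdot y v = g v" for v
  proof -
    have "g v = g (\<Sum>i\<in>UNIV. v $ i *s axis i 1)" by (simp add: basis_expansion)
    also have "\<dots> = (\<Sum>i\<in>UNIV. v $ i * g (axis i 1))"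
      using g(1) by (simp add: vp.linear_sum vp.linear_scale)
    also have "\<dots> = bdot y v" unfolding bdot_def y_def by (simp add: mult.commute)
    finally show ?thesis by simp
  qed
  have "g z = 0" if "z \<in> Z" for z
  proof -
    have "z \<in> vec.span B" using that spB by simp
    moreover have "\<forall>b\<in>B. g b = 0" using g(2) e B(1) by auto
    ultimately show ?thesis using vp.linear_eq_0_on_span[OF g(1)] by blast
  qed
  moreover have "g e = 1" using g(2) by simp
  ultimately show ?thesis using yg by (intro exI[of _ y]) auto
qed

definition ann :: "('a::field^'n) set \<Rightarrow> ('a^'n) set" where
  "ann S = {y. \<forall>z\<in>S. bdot y z = 0}"

lemma ann_dim_aux:
  "\<forall>Z::('a::field^'n) set. vec.subspace Z \<longrightarrow> vec.dim Z = d \<longrightarrow> vec.dim (ann Z) + d \<le> CARD('n)"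
proof (induction d)
  case 0
  then show ?case using dim_subset_UNIV_cart_gen by auto
next
  case (Suc d)
  show ?case
  proof (intro allI impI)
    fix Z :: "('a^'n) set"
    assume Z: "vec.subspace Z" and dZ: "vec.dim Z = Suc d"
    obtain B where B: "B \<subseteq> Z" "vec.independent B" "Z \<subseteq> vec.span B" "card B = vec.dim Z"
      using vec.basis_exists by blast
    have fB: "finite B" using B(2) vec.finiteI_independent by blast
    have "B \<noteq> {}" using B(4) dZ by auto
    then obtain e where eB: "e \<in> B" by blast
    define Z0 where "Z0 = vec.span (B - {e})"
    have Z0s: "vec.subspace Z0" unfolding Z0_def by simp
    have dZ0: "vec.dim Z0 = d"
    proof -
      have "vec.independent (B - {e})" using B(2) vec.independent_mono by blast
      then have "vec.dim (B - {e}) = card (B - {e})" by (rule vec.dim_eq_card_independent)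
      also have "\<dots> = d" using B(4) dZ eB fB by simp
      finally show ?thesis unfolding Z0_def by simp
    qed
    have eZ0: "e \<notin> Z0"
      unfolding Z0_def using B(2) eB vec.dependent_def by blast
    have Z0Z: "Z0 \<subseteq> Z" unfolding Z0_def using B(1) Z vec.span_minimal by (meson Diff_subset order_trans)
    have eZ: "e \<in> Z" using B(1) eB by blast
    obtain y where y: "\<forall>z\<in>Z0. bdot y z = 0" "bdot y e \<noteq> 0"
      using separate[OF Z0s eZ0] by blast
    have sub: "ann Z \<subset> ann Z0"
      unfolding ann_def using Z0Z y eZ by blast
    have "vec.dim (ann Z) < vec.dim (ann Z0)"
    proof -
      have s1: "vec.span (ann Z) = ann Z" using subspace_ann[of Z] unfolding ann_def[symmetric] by simp
      have s2: "vec.span (ann Z0) = ann Z0" using subspace_ann[of Z0] unfolding ann_def[symmetric] by simp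
      show ?thesis using vec.dim_psubset[of "ann Z" "ann Z0"] sub unfolding s1 s2 by blast
    qed
    moreover have "vec.dim (ann Z0) + d \<le> CARD('n)" using Suc Z0s dZ0 by blast
    ultimately show "vec.dim (ann Z) + Suc d \<le> CARD('n)" by simp
  qed
qed

lemma ann_dim:
  fixes Z :: "('a::field^'n) set"
  assumes "vec.subspace Z"
  shows "vec.dim (ann Z) + vec.dim Z \<le> CARD('n)"
  using ann_dim_aux assms by blast



lemma mv_scale: "M *v (c *s v) = c *s (M *v (v::'a::field^'n))"
  by (simp add: vec_eq_iff matrix_vector_mult_def sum_distrib_left algebra_simps)

lemma mat_scale_mv: "mat_scale c M *v v = c *s (M *v (v::'a::field^'n))"
  by (simp add: vec_eq_iff matrix_vector_mult_def mat_scale_def sum_distrib_left algebra_simps)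

lemma mv_axis: "(M *v axis j 1) $ i = M $ i $ (j::'n) " for M :: "'a::field^'n^'m"
proof -
  have "(M *v axis j 1) $ i = (\<Sum>k\<in>UNIV. M $ i $ k * (if k = j then 1 else 0))"
    unfolding matrix_vector_mult_def axis_def by simp
  also have "\<dots> = (\<Sum>k\<in>UNIV. if k = j then M $ i $ j else 0)"
    by (intro sum.cong refl) auto
  also have "\<dots> = M $ i $ j" by simp
  finally show ?thesis .
qed

lemma kernel_subspace: "vec.subspace {z. M *v z = (0::'a::field^'n)}"
  unfolding vec.subspace_def by (simp add: matrix_vector_right_distrib mv_scale)

lemma full_dim_univ:
  fixes Z :: "('a::field^'n) set"
  assumes "vec.subspace Z" "vec.dim Z = CARD('n)"
  shows "Z = UNIV"
proof -
  show ?thesis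
    by (rule vec.subspace_dim_equal[OF assms(1) vec.subspace_UNIV]) (use assms(2) vec_dim_card[where 'a='a and 'n='n] in auto)
qed

lemma V0_props:
  fixes V :: "('a::field^'n^'n) set"
  assumes V: "matsp.subspace V" and alt: "\<forall>M\<in>V. alternating M"
  shows "matsp.subspace {M\<in>V. M *v e = 0}" "\<forall>M\<in>{M\<in>V. M *v e = 0}. alternating M"
proof -
  show "matsp.subspace {M\<in>V. M *v e = 0}"
    using V unfolding matsp.subspace_def by (simp add: matrix_vector_mult_add_rdistrib mat_scale_mv)
  show "\<forall>M\<in>{M\<in>V. M *v e = 0}. alternating M" using alt by simp
qed

lemma kills_span:
  fixes M :: "'a::field^'n^'n"
  assumes "\<forall>z\<in>S. M *v z = 0"
  shows "\<forall>z\<in>vec.span S. M *v z = 0"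
  using vec.span_minimal[OF _ kernel_subspace[of M], of S] assms by blast

lemma choose2_Suc: "Suc k choose 2 = (k choose 2) + k"
proof -
  have 2: "(2::nat) = Suc 1" by simp
  show ?thesis unfolding 2 binomial_Suc_Suc choose_one by simp
qed

lemma bound_aux:
  "\<forall>(V::('a::field^'n^'n) set) Z. matsp.subspace V \<longrightarrow> (\<forall>M\<in>V. alternating M) \<longrightarrow>
     vec.subspace Z \<longrightarrow> (\<forall>M\<in>V. \<forall>z\<in>Z. M *v z = 0) \<longrightarrow> vec.dim Z + k = CARD('n) \<longrightarrow>
     matsp.dim V \<le> k choose 2"
proof (induction k)
  case 0
  show ?case
  proof (intro allI impI)
    fix V :: "('a::field^'n^'n) set" and Z
    assume V: "matsp.subspace V" and Z: "vec.subspace Z" and kill: "\<forall>M\<in>V. \<forall>z\<in>Z. M *v z = 0"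
      and d: "vec.dim Z + 0 = CARD('n)"
    have ZU: "Z = UNIV" using full_dim_univ[OF Z] d by simp
    have "V \<subseteq> {0}"
    proof
      fix M assume M: "M \<in> V"
      have "M $ i $ j = 0" for i j
        using kill M ZU mv_axis[of M j i] by (metis UNIV_I zero_index)
      then have "M = 0" by (simp add: vec_eq_iff)
      then show "M \<in> {0}" by simp
    qed
    then have "matsp.dim V = 0" using matfd.dim_eq_0 by blast
    then show "matsp.dim V \<le> 0 choose 2" by (simp add: numeral_2_eq_2)
  qed
next
  case (Suc k)
  show ?case
  proof (intro allI impI)
    fix V :: "('a::field^'n^'n) set" and Z
    assume V: "matsp.subspace V" and alt: "\<forall>M\<in>V. alternating M" and Z: "vec.subspace Z"
      and kill: "\<forall>M\<in>V. \<forall>z\<in>Z. M *v z = 0" and d: "vec.dim Z + Suc k = CARD('n)"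
    have "Z \<noteq> UNIV" using d vec_dim_card[where 'a='a and 'n='n] by auto
    then obtain e where e: "e \<notin> Z" by blast
    define V0 where "V0 = {M\<in>V. M *v e = 0}"
    define Z' where "Z' = vec.span (insert e Z)"
    have V0s: "matsp.subspace V0" and alt0: "\<forall>M\<in>V0. alternating M"
      using V0_props[OF V alt] unfolding V0_def by auto
    have Z's: "vec.subspace Z'" unfolding Z'_def by simp
    have kill0: "\<forall>M\<in>V0. \<forall>z\<in>Z'. M *v z = 0"
    proof
      fix M assume M: "M \<in> V0"
      then have "\<forall>z\<in>insert e Z. M *v z = 0" using kill unfolding V0_def by auto
      then show "\<forall>z\<in>Z'. M *v z = 0" unfolding Z'_def by (rule kills_span)
    qed
    have spZ: "vec.span Z = Z" using Z by (simp add: vec.span_eq_iff[THEN iffD2])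
    have dZ': "vec.dim Z' = vec.dim Z + 1"
      unfolding Z'_def vec.dim_span using e by (simp add: vec.dim_insert spZ)
    have d': "vec.dim Z' + k = CARD('n)" using d dZ' by simp
    have IH: "matsp.dim V0 \<le> k choose 2" using Suc.IH V0s alt0 Z's kill0 d' by blast
    have Ve: "(\<lambda>M. M *v e) ` V \<subseteq> ann Z'"
    proof
      fix w assume "w \<in> (\<lambda>M. M *v e) ` V"
      then obtain M where M: "M \<in> V" "w = M *v e" by blast
      have "insert e Z \<subseteq> {v. bdot w v = 0}"
      proof
        fix z assume "z \<in> insert e Z"
        then show "z \<in> {v. bdot w v = 0}"
        proof
          assume "z = e" then show ?thesis using alt_iso[of M e] alt M by (simp add: bdot_comm)
        next
          assume "z \<in> Z"
          then have "M *v z = 0" using kill M by blast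
          then show ?thesis using alt_skew[of M z e] alt M by (simp add: bdot_comm)
        qed
      qed
      then have "Z' \<subseteq> {v. bdot w v = 0}" unfolding Z'_def by (rule vec.span_minimal) (rule subspace_bdot0)
      then show "w \<in> ann Z'" unfolding ann_def by blast
    qed
    have "vec.dim ((\<lambda>M. M *v e) ` V) \<le> vec.dim (ann Z')" using Ve by (rule vec.dim_subset)
    moreover have "vec.dim (ann Z') + vec.dim Z' \<le> CARD('n)" using ann_dim[OF Z's] .
    ultimately have dVe: "vec.dim ((\<lambda>M. M *v e) ` V) \<le> k" using d' by linarith
    have "matsp.dim V \<le> matsp.dim V0 + vec.dim ((\<lambda>M. M *v e) ` V)"
      unfolding V0_def by (rule rank_nullity_le[OF V])
    then show "matsp.dim V \<le> Suc k choose 2" using IH dVe choose2_Suc[of k] by linarith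
  qed
qed



lemma main_aux:
  "\<forall>(V::('a::field^'n^'n) set) Z H1 H2. matsp.subspace V \<longrightarrow> (\<forall>M\<in>V. alternating M) \<longrightarrow>
     vec.subspace Z \<longrightarrow> (\<forall>M\<in>V. \<forall>z\<in>Z. M *v z = 0) \<longrightarrow> vec.dim Z + k = CARD('n) \<longrightarrow>
     vec.subspace H1 \<longrightarrow> vec.subspace H2 \<longrightarrow> Z \<subseteq> H1 \<longrightarrow> Z \<subseteq> H2 \<longrightarrow> H1 \<noteq> UNIV \<longrightarrow> H2 \<noteq> UNIV \<longrightarrow>
     (CARD('a) = 2 \<longrightarrow> H1 = H2) \<longrightarrow> (k - 1) choose 2 < matsp.dim V \<longrightarrow>
     (\<exists>x. x \<notin> H1 \<and> x \<notin> H2 \<and> k - 1 \<le> vec.dim ((\<lambda>M. M *v x) ` V))"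
proof (induction k)
  case 0
  show ?case
  proof (intro allI impI)
    fix V :: "('a::field^'n^'n) set" and Z H1 H2 :: "('a^'n) set"
    assume Z: "vec.subspace Z" and d: "vec.dim Z + 0 = CARD('n)" and ZH: "Z \<subseteq> H1" and HU: "H1 \<noteq> UNIV"
    have "Z = UNIV" using full_dim_univ[OF Z] d by simp
    then show "\<exists>x. x \<notin> H1 \<and> x \<notin> H2 \<and> 0 - 1 \<le> vec.dim ((\<lambda>M. M *v x) ` V)" using ZH HU by blast
  qed
next
  case (Suc k)
  show ?case
  proof (intro allI impI)
    fix V :: "('a::field^'n^'n) set" and Z H1 H2 :: "('a^'n) set"
    assume V: "matsp.subspace V" and alt: "\<forall>M\<in>V. alternating M" and Z: "vec.subspace Z"
      and kill: "\<forall>M\<in>V. \<forall>z\<in>Z. M *v z = 0" and d: "vec.dim Z + Suc k = CARD('n)"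
      and H1: "vec.subspace H1" and H2: "vec.subspace H2" and ZH1: "Z \<subseteq> H1" and ZH2: "Z \<subseteq> H2"
      and H1U: "H1 \<noteq> UNIV" and H2U: "H2 \<noteq> UNIV" and c2: "CARD('a) = 2 \<longrightarrow> H1 = H2"
      and big: "(Suc k - 1) choose 2 < matsp.dim V"
    obtain e where e1: "e \<notin> H1" and e2: "e \<notin> H2" using union_two_proper[OF H1 H2 H1U H2U] by blast
    have eZ: "e \<notin> Z" using e1 ZH1 by blast
    show "\<exists>x. x \<notin> H1 \<and> x \<notin> H2 \<and> Suc k - 1 \<le> vec.dim ((\<lambda>M. M *v x) ` V)"
    proof (cases "k \<le> vec.dim ((\<lambda>M. M *v e) ` V)")
      case True
      then show ?thesis using e1 e2 by auto
    next
      case False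
      then have dVe: "vec.dim ((\<lambda>M. M *v e) ` V) + 1 \<le> k" by simp
      then obtain j where kj: "k = Suc j" by (cases k) auto
      define V0 where "V0 = {M\<in>V. M *v e = 0}"
      define Z' where "Z' = vec.span (insert e Z)"
      have V0s: "matsp.subspace V0" and alt0: "\<forall>M\<in>V0. alternating M"
        using V0_props[OF V alt] unfolding V0_def by auto
      have Z's: "vec.subspace Z'" unfolding Z'_def by simp
      have spZ: "vec.span Z = Z" using Z by (simp add: vec.span_eq_iff[THEN iffD2])
      have dZ': "vec.dim Z' = vec.dim Z + 1"
        unfolding Z'_def vec.dim_span using eZ by (simp add: vec.dim_insert spZ)
      have d': "vec.dim Z' + k = CARD('n)" using d dZ' by simp
      have killZ': "\<forall>z\<in>Z'. M *v z = 0" if "M \<in> V" "M *v e = 0" for M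
      proof -
        have "\<forall>z\<in>insert e Z. M *v z = 0" using kill that by auto
        then show ?thesis unfolding Z'_def by (rule kills_span)
      qed
      have kill0: "\<forall>M\<in>V0. \<forall>z\<in>Z'. M *v z = 0" using killZ' unfolding V0_def by blast
      have rn: "matsp.dim V \<le> matsp.dim V0 + vec.dim ((\<lambda>M. M *v e) ` V)"
        unfolding V0_def by (rule rank_nullity_le[OF V])
      have bigk: "k choose 2 < matsp.dim V" using big by simp
      have cj: "k choose 2 = (j choose 2) + j" unfolding kj by (rule choose2_Suc)
      have big0: "(k - 1) choose 2 < matsp.dim V0"
        using rn bigk cj dVe kj by simp
      obtain M1 where M1: "M1 \<in> V" "M1 *v e \<noteq> 0"
      proof (rule ccontr)
        assume "\<not> thesis"
        then have allz: "\<forall>M\<in>V. M *v e = 0" using that by blast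
        have "\<forall>M\<in>V. \<forall>z\<in>Z'. M *v z = 0" using killZ' allz by blast
        then have "matsp.dim V \<le> k choose 2" using bound_aux V alt Z's d' by blast
        then show False using bigk by simp
      qed
      define w where "w = M1 *v e"
      define H' where "H' = {y. bdot w y = 0}"
      have H's: "vec.subspace H'" unfolding H'_def by (rule subspace_bdot0)
      have H'U: "H' \<noteq> UNIV"
      proof
        assume "H' = UNIV"
        have "w \<noteq> 0" using M1 unfolding w_def by simp
        then obtain i where "w $ i \<noteq> 0" by (auto simp: vec_eq_iff)
        moreover have "axis i 1 \<in> H'" using \<open>H' = UNIV\<close> by simp
        ultimately show False unfolding H'_def by (simp add: bdot_axis)
      qed
      have alt1: "alternating M1" using alt M1 by blast
      have "insert e Z \<subseteq> H'"
      proof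
        fix z assume "z \<in> insert e Z"
        then show "z \<in> H'"
        proof
          assume "z = e" then show ?thesis unfolding H'_def w_def using alt_iso[OF alt1, of e] by (simp add: bdot_comm)
        next
          assume "z \<in> Z"
          then have "M1 *v z = 0" using kill M1 by blast
          then show ?thesis unfolding H'_def w_def using alt_skew[OF alt1, of z e] by (simp add: bdot_comm)
        qed
      qed
      then have Z'H': "Z' \<subseteq> H'" unfolding Z'_def using H's by (rule vec.span_minimal)
      have "\<exists>x. x \<notin> H' \<and> x \<notin> H' \<and> k - 1 \<le> vec.dim ((\<lambda>M. M *v x) ` V0)"
        using Suc.IH V0s alt0 Z's kill0 d' H's Z'H' H'U big0 by blast
      then obtain x' where x': "x' \<notin> H'" "k - 1 \<le> vec.dim ((\<lambda>M. M *v x') ` V0)" by blast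
      obtain t where t: "x' + t *s e \<notin> H1" "x' + t *s e \<notin> H2"
        using line_avoid[OF H1 H2 e1 e2] c2 by blast
      define x where "x = x' + t *s e"
      have imgeq: "(\<lambda>M. M *v x) ` V0 = (\<lambda>M. M *v x') ` V0"
      proof (rule image_cong[OF refl])
        fix M assume "M \<in> V0"
        then have "M *v e = 0" unfolding V0_def by simp
        then show "M *v x = M *v x'" unfolding x_def by (simp add: matrix_vector_right_distrib mv_scale)
      qed
      define u where "u = M1 *v x"
      have "(\<lambda>M. M *v x) ` V0 \<subseteq> {v. bdot e v = 0}"
      proof
        fix v assume "v \<in> (\<lambda>M. M *v x) ` V0"
        then obtain M where M: "M \<in> V0" "v = M *v x" by blast
        have "M *v e = 0" "alternating M" using M(1) alt0 unfolding V0_def by auto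
        then show "v \<in> {v. bdot e v = 0}" using alt_skew[of M e x] M(2) by simp
      qed
      then have spsub: "vec.span ((\<lambda>M. M *v x) ` V0) \<subseteq> {v. bdot e v = 0}"
        by (rule vec.span_minimal) (rule subspace_bdot0)
      have "bdot e u = bdot e (M1 *v x') + t * bdot e (M1 *v e)"
        unfolding u_def x_def by (simp add: matrix_vector_right_distrib mv_scale bdot_add_right bdot_scale_right)
      also have "\<dots> = - bdot x' w"
        using alt_skew[OF alt1, of e x'] alt_iso[OF alt1, of e] unfolding w_def by simp
      finally have "bdot e u \<noteq> 0" using x'(1) unfolding H'_def by (simp add: bdot_comm)
      then have unot: "u \<notin> vec.span ((\<lambda>M. M *v x) ` V0)" using spsub by blast
      have "vec.dim (insert u ((\<lambda>M. M *v x) ` V0)) = vec.dim ((\<lambda>M. M *v x) ` V0) + 1"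
        using unot by (simp add: vec.dim_insert)
      moreover have "insert u ((\<lambda>M. M *v x) ` V0) \<subseteq> (\<lambda>M. M *v x) ` V"
        unfolding u_def V0_def using M1(1) by auto
      then have "vec.dim (insert u ((\<lambda>M. M *v x) ` V0)) \<le> vec.dim ((\<lambda>M. M *v x) ` V)"
        by (rule vec.dim_subset)
      ultimately have "k \<le> vec.dim ((\<lambda>M. M *v x) ` V)" using x'(2) imgeq kj by simp
      then show ?thesis using t unfolding x_def by auto
    qed
  qed
qed

lemma hyperplane_props:
  fixes H :: "('a::field^'n) set"
  assumes "linear_hyperplane H"
  shows "vec.subspace H" "H \<noteq> UNIV" "0 \<in> H"
proof -
  obtain a :: "'a^'n" where a: "a \<noteq> 0" "H = {x. (\<Sum>i\<in>UNIV. a $ i * x $ i) = 0}"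
    using assms unfolding linear_hyperplane_def by blast
  have Ha: "H = {x. bdot a x = 0}" unfolding a(2) bdot_def by simp
  show "vec.subspace H" unfolding Ha by (rule subspace_bdot0)
  show "0 \<in> H" unfolding Ha by simp
  obtain i where "a $ i \<noteq> 0" using a(1) by (auto simp: vec_eq_iff)
  then have "axis i 1 \<notin> H" unfolding Ha by (simp add: bdot_axis)
  then show "H \<noteq> UNIV" by blast
qed

theorem mainTheorem18:
  fixes V :: "('a::field^'n^'n) set" and C :: "('a^'n) set"
  assumes "matsp.subspace V"
    and "\<forall>M\<in>V. alternating M"
    and "CARD('a) = 2 \<Longrightarrow> linear_hyperplane C"
    and "CARD('a) \<noteq> 2 \<Longrightarrow> (\<exists>H1 H2. linear_hyperplane H1 \<and> linear_hyperplane H2 \<and> C = H1 \<union> H2)"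
    and "{x. vec.dim ((\<lambda>M. M *v x) ` V) = CARD('n) - 1} \<subseteq> C"
  shows "matsp.dim V \<le> (CARD('n) - 1) choose 2"
proof (rule ccontr)
  assume "\<not> ?thesis"
  then have big: "(CARD('n) - 1) choose 2 < matsp.dim V" by simp
  obtain H1 H2 where H: "linear_hyperplane H1" "linear_hyperplane H2" "C = H1 \<union> H2"
    "CARD('a) = 2 \<longrightarrow> H1 = H2"
  proof (cases "CARD('a) = 2")
    case True then show ?thesis using that assms(3) by blast
  next
    case False then show ?thesis using that assms(4) by blast
  qed
  note h1 = hyperplane_props[OF H(1)] and h2 = hyperplane_props[OF H(2)]
  have Z0: "vec.subspace {0::'a^'n}" by simp
  have "\<exists>x. x \<notin> H1 \<and> x \<notin> H2 \<and> CARD('n) - 1 \<le> vec.dim ((\<lambda>M. M *v x) ` V)"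
  proof -
    have kill: "\<forall>M\<in>V. \<forall>z\<in>{0}. M *v z = 0" by simp
    have dZ: "vec.dim {0::'a^'n} + CARD('n) = CARD('n)" by simp
    have s1: "{0} \<subseteq> H1" "{0} \<subseteq> H2" using h1(3) h2(3) by auto
    note mm = main_aux[of "CARD('n)", THEN spec[of _ V], THEN spec[of _ "{0}"], THEN spec[of _ H1], THEN spec[of _ H2]]
    show ?thesis
      by (rule mm[THEN mp, THEN mp, THEN mp, THEN mp, THEN mp, THEN mp, THEN mp, THEN mp, THEN mp,
          THEN mp, THEN mp, THEN mp, THEN mp])
        (fact assms(1) assms(2) Z0 kill dZ h1(1) h2(1) s1 h1(2) h2(2) H(4) big)+
  qed
  then obtain x where x: "x \<notin> H1" "x \<notin> H2" "CARD('n) - 1 \<le> vec.dim ((\<lambda>M. M *v x) ` V)" by blast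
  have x0: "x \<noteq> 0" using x(1) h1(3) by blast
  define P where "P = {v. bdot x v = 0}"
  have Ps: "vec.subspace P" unfolding P_def by (rule subspace_bdot0)
  have PU: "P \<noteq> UNIV"
  proof
    assume PU: "P = UNIV"
    obtain i where "x $ i \<noteq> 0" using x0 by (auto simp: vec_eq_iff)
    moreover have "axis i 1 \<in> P" using PU by simp
    ultimately show False unfolding P_def by (simp add: bdot_axis)
  qed
  have "vec.dim P < vec.dim (UNIV :: ('a^'n) set)"
  proof (rule vec.dim_psubset)
    have spP: "vec.span P = P" using Ps vec.span_eq_iff by blast
    show "vec.span P \<subset> vec.span UNIV" unfolding spP vec.span_UNIV using PU by blast
  qed
  then have dP: "vec.dim P < CARD('n)" using vec_dim_card[where 'a='a and 'n='n] by simp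
  have "(\<lambda>M. M *v x) ` V \<subseteq> P" unfolding P_def using assms(2) alt_iso by blast
  then have "vec.dim ((\<lambda>M. M *v x) ` V) \<le> vec.dim P" by (rule vec.dim_subset)
  then have "vec.dim ((\<lambda>M. M *v x) ` V) = CARD('n) - 1" using x(3) dP by linarith
  then have "x \<in> C" using assms(5) by blast
  then show False using x H(3) by blast
qed

end
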